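(* For every $d\ge1$, \[ \psi_{-1}^{(d)}(x_1,\,x_1+x_2,\,\dots,\,x_1+\cdots+x_d)=\frac{1}{x_1+\cdots+x_d}\,\bigl(\log(\mathsf{paj})\bigr)^{d}(x_1,\dots,x_d). \]
   Context: Moulds: families $M=(M^m(x_1,\dots,x_m))_{m\ge0}$ of rational functions, with product $(M\times N)^m(x_1,\dots,x_m)=\sum_{k=0}^mM^k(x_1,\dots,x_k)N^{m-k}(x_{k+1},\dots,x_m)$ and unit $1$ (equal to $1$ in length $0$ and $0$ otherwise). $\mathsf{paj}^0=1$ and $\mathsf{paj}^m(x_1,\dots,x_m)=\frac1{x_1(x_1+x_2)\cdots(x_1+\cdots+x_m)}$ for $m\ge1$. $\log(\mathsf{paj}):=\sum_{h\ge1}\frac{(-1)^{h+1}}{h}(\mathsf{paj}-1)^{\times h}$ (powers for the product $\times$; finite in each length). Vines: a bunch of $n$ grapes $g_n$ on labels $\{i,\dots,i+n\}$ is the tree with edges joining the stalk $i$ to each grape $i+1,\dots,i+n$. A vine with $d$ grapes is a sequence $v=g_{n_1}\cdots g_{n_k}$ with $n_j\ge1$, $n_1+\cdots+n_k=d$, giving the rooted tree on $\{0,1,\dots,d\}$ (root $0$) obtained by taking $g_{n_1}$ on $\{0,\dots,n_1\}$ and successively grafting $g_{n_j}$ on labels $\{n_1+\cdots+n_{j-1},\dots,n_1+\cdots+n_j\}$, its stalk being identified with the highest-labelled grape $n_1+\cdots+n_{j-1}$ of the previous vine. Its height is $h(v)=k$. $\mathcal V_d$ is the set of vines with $d$ grapes.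 With $x_0=0$, $x_v=\prod_{(i,j)}(x_j-x_i)$ over edges $(i,j)$ of $v$ with $i<j$. Define $\psi_{-1}^{(d)}(x_1,\dots,x_d)=\sum_{v\in\mathcal V_d}\frac{(-1)^{h(v)+1}}{h(v)}\frac{1}{x_v\,x_d}$. *)

theory Defs
  imports Main
begin

(* A mould over a field 'a: its length-m component is evaluated on a list of
   m arguments (x_1,...,x_m). *)
type_synonym 'a mould = "'a list \<Rightarrow> 'a"

definition mould_one :: "('a::field) mould" where
  "mould_one xs = (if xs = [] then 1 else 0)"

definition mould_mult :: "('a::field) mould \<Rightarrow> 'a mould \<Rightarrow> 'a mould" where
  "mould_mult M N xs = (\<Sum>k = 0..length xs. M (take k xs) * N (drop k xs))"

definition mould_minus :: "('a::field) mould \<Rightarrow> 'a mould \<Rightarrow> 'a mould" where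
  "mould_minus M N xs = M xs - N xs"

fun mould_pow :: "('a::field) mould \<Rightarrow> nat \<Rightarrow> 'a mould" where
  "mould_pow M 0 = mould_one"
| "mould_pow M (Suc h) = mould_mult (mould_pow M h) M"

definition paj :: "('a::field) mould" where
  "paj xs = 1 / (\<Prod>i = 1..length xs. sum_list (take i xs))"

(* log(paj) = sum_{h>=1} (-1)^(h+1)/h (paj - 1)^h ; in length m only h <= m
   contribute since (paj - 1) vanishes in length 0. *)
definition log_paj :: "('a::field) mould" where
  "log_paj xs = (\<Sum>h = 1..length xs.
      ((-1) ^ (h + 1) / of_nat h) * mould_pow (mould_minus paj mould_one) h xs)"

(* A vine with d grapes: the sequence (n_1,...,n_k) of bunch sizes, n_j >= 1,
   summing to d. *)
definition vines :: "nat \<Rightarrow> nat list set" where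
  "vines d = {ns. (\<forall>n\<in>set ns. 1 \<le> n) \<and> sum_list ns = d}"

(* Edges (i,j), i<j, of the rooted tree on {0..d}: the j-th bunch has stalk
   s_j = n_1+...+n_{j-1} and grapes s_j+1,...,s_j+n_j. *)
definition vine_edges :: "nat list \<Rightarrow> (nat \<times> nat) set" where
  "vine_edges ns = (\<Union>j<length ns.
      {(sum_list (take j ns), sum_list (take j ns) + t) | t. 1 \<le> t \<and> t \<le> ns ! j})"

(* x_v with the convention x_0 = 0; arguments are x 1, ..., x d *)
definition vine_x :: "nat list \<Rightarrow> (nat \<Rightarrow> 'a::field) \<Rightarrow> 'a" where
  "vine_x ns x = (\<Prod>(i, j)\<in>vine_edges ns.
      (if j = 0 then 0 else x j) - (if i = 0 then 0 else x i))"

definition psi_m1 :: "nat \<Rightarrow> (nat \<Rightarrow> 'a::field) \<Rightarrow> 'a" where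
  "psi_m1 d x = (\<Sum>v\<in>vines d.
      ((-1) ^ (length v + 1) / of_nat (length v)) * (1 / (vine_x v x * x d)))"

end

theory Submission
  imports Defs
begin

fun blocks :: "nat list \<Rightarrow> 'b list \<Rightarrow> 'b list list" where
  "blocks [] xs = []"
| "blocks (n # ns) xs = take n xs # blocks ns (drop n xs)"

definition comps :: "nat \<Rightarrow> nat \<Rightarrow> nat list set" where
  "comps h L = {ns. length ns = h \<and> (\<forall>n\<in>set ns. 1 \<le> n) \<and> sum_list ns = L}"

lemma len_le_sum: "\<forall>n\<in>set ns. 1 \<le> n \<Longrightarrow> length ns \<le> sum_list ns"
  by (induction ns) auto

lemma sum_le_set: "n \<in> set ns \<Longrightarrow> n \<le> sum_list (ns::nat list)"
  by (induction ns) auto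

lemma finite_comps: "finite (comps h L)"
proof -
  have "comps h L \<subseteq> {ns. set ns \<subseteq> {0..L} \<and> length ns = h}"
    unfolding comps_def using sum_le_set by fastforce
  moreover have "finite {ns. set ns \<subseteq> {0..L} \<and> length ns = h}"
    by (rule finite_lists_length_eq) simp
  ultimately show ?thesis by (rule finite_subset)
qed

lemma blocks_append:
  "blocks (ns @ ms) xs = blocks ns xs @ blocks ms (drop (sum_list ns) xs)"
  by (induction ns arbitrary: xs) (auto simp: add.commute)

lemma blocks_take:
  "sum_list ns \<le> k \<Longrightarrow> blocks ns (take k xs) = blocks ns xs"
proof (induction ns arbitrary: k xs)
  case Nil then show ?case by simp
next
  case (Cons n ns)
  have "drop n (take k xs) = take (k - n) (drop n xs)" by (simp add: drop_take)
  moreover have "take n (take k xs) = take n xs" using Cons.prems by (simp add: min_def)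
  ultimately show ?case using Cons by simp
qed

lemma comps_zero: "comps 0 L = (if L = 0 then {[]} else {})"
  unfolding comps_def by auto

lemma comps_Suc:
  "comps (Suc h) L = (\<lambda>(k, ns). ns @ [L - k]) ` (SIGMA k:{0..<L}. comps h k)"
proof
  show "comps (Suc h) L \<subseteq> (\<lambda>(k, ns). ns @ [L - k]) ` (SIGMA k:{0..<L}. comps h k)"
  proof
    fix v assume v: "v \<in> comps (Suc h) L"
    then have "v \<noteq> []" unfolding comps_def by auto
    then obtain ns n where vn: "v = ns @ [n]" by (metis rev_exhaust)
    have "(sum_list ns, ns) \<in> (SIGMA k:{0..<L}. comps h k)"
      using v unfolding vn comps_def by auto
    moreover have "v = (\<lambda>(k, ns). ns @ [L - k]) (sum_list ns, ns)"
      using v unfolding vn comps_def by auto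
    ultimately show "v \<in> (\<lambda>(k, ns). ns @ [L - k]) ` (SIGMA k:{0..<L}. comps h k)"
      by blast
  qed
  show "(\<lambda>(k, ns). ns @ [L - k]) ` (SIGMA k:{0..<L}. comps h k) \<subseteq> comps (Suc h) L"
    unfolding comps_def by auto
qed

lemma inj_snoc: "inj_on (\<lambda>(k, ns). ns @ [L - k]) (SIGMA k:{0..<L}. comps h k)"
  unfolding inj_on_def comps_def by auto

lemma pow_comps:
  "mould_pow (mould_minus paj mould_one) h (xs :: 'a::field list)
     = (\<Sum>ns\<in>comps h (length xs). prod_list (map paj (blocks ns xs)))"
proof (induction h arbitrary: xs)
  case 0
  show ?case by (simp add: comps_zero mould_one_def)
next
  case (Suc h)
  let ?M = "mould_minus paj mould_one :: 'a mould"
  let ?L = "length xs"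
  have M0: "?M [] = 0" by (simp add: mould_minus_def paj_def mould_one_def)
  have "mould_pow ?M (Suc h) xs = (\<Sum>k = 0..?L. mould_pow ?M h (take k xs) * ?M (drop k xs))"
    by (simp add: mould_mult_def)
  also have "\<dots> = (\<Sum>k\<in>{0..<?L}. mould_pow ?M h (take k xs) * ?M (drop k xs))"
    using M0 by (simp add: atLeastLessThanSuc_atLeastAtMost[symmetric])
  also have "\<dots> = (\<Sum>k\<in>{0..<?L}. \<Sum>ns\<in>comps h k. prod_list (map paj (blocks ns xs)) * paj (drop k xs))"
  proof (rule sum.cong[OF refl])
    fix k assume k: "k \<in> {0..<?L}"
    have "?M (drop k xs) = paj (drop k xs)" using k by (simp add: mould_minus_def mould_one_def)
    moreover have "length (take k xs) = k" using k by simp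
    moreover have "\<And>ns. ns \<in> comps h k \<Longrightarrow> blocks ns (take k xs) = blocks ns xs"
      by (rule blocks_take) (simp add: comps_def)
    ultimately show "mould_pow ?M h (take k xs) * ?M (drop k xs) =
      (\<Sum>ns\<in>comps h k. prod_list (map paj (blocks ns xs)) * paj (drop k xs))"
      using Suc.IH[of "take k xs"] by (simp add: sum_distrib_right)
  qed
  also have "\<dots> = (\<Sum>(k, ns)\<in>(SIGMA k:{0..<?L}. comps h k). prod_list (map paj (blocks (ns @ [?L - k]) xs)))"
    unfolding sum.Sigma[OF finite_atLeastLessThan, OF ballI[OF finite_comps]]
  proof (rule sum.cong[OF refl])
    fix p assume p: "p \<in> (SIGMA k:{0..<?L}. comps h k)"
    obtain k ns where pk: "p = (k, ns)" by force
    have s: "sum_list ns = k" "k < ?L" using p unfolding pk comps_def by auto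
    have "blocks (ns @ [?L - k]) xs = blocks ns xs @ [drop k xs]"
      using s by (simp add: blocks_append)
    then show "(case p of (k, ns) \<Rightarrow> prod_list (map paj (blocks ns xs)) * paj (drop k xs)) =
         (case p of (k, ns) \<Rightarrow> prod_list (map paj (blocks (ns @ [?L - k]) xs)))"
      unfolding pk by simp
  qed
  also have "\<dots> = (\<Sum>v\<in>comps (Suc h) ?L. prod_list (map paj (blocks v xs)))"
    unfolding comps_Suc sum.reindex[OF inj_snoc] by (simp add: case_prod_unfold)
  finally show ?case .
qed


lemma vine_edges_Nil: "vine_edges [] = {}"
  by (simp add: vine_edges_def)

lemma vine_edges_Cons:
  "vine_edges (n # ns) = {(0, t) | t. 1 \<le> t \<and> t \<le> n} \<union> (\<lambda>(i, j). (i + n, j + n)) ` vine_edges ns"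
proof -
  have "{..<length (n # ns)} = insert 0 (Suc ` {..<length ns})"
    by (simp add: lessThan_Suc_eq_insert_0)
  then show ?thesis
    unfolding vine_edges_def by (auto simp: image_UN image_iff add.commute)
qed

lemma finite_vine_edges: "finite (vine_edges ns)"
proof (induction ns)
  case Nil then show ?case by (simp add: vine_edges_Nil)
next
  case (Cons n ns)
  have "{(0::nat, t) | t. 1 \<le> t \<and> t \<le> n} = (\<lambda>t. (0, t)) ` {1..n}" by auto
  then show ?case using Cons by (simp add: vine_edges_Cons)
qed

lemma vine_edges_bound: "(i, j) \<in> vine_edges ns \<Longrightarrow> i \<le> j \<and> j \<le> sum_list ns"
proof (induction ns arbitrary: i j)
  case Nil then show ?case by (simp add: vine_edges_Nil)
next
  case (Cons n ns)
  then show ?case by (auto simp: vine_edges_Cons)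
qed

lemma vine_prod:
  fixes ys :: "'a::field list"
  shows "\<forall>n\<in>set ns. 1 \<le> n \<Longrightarrow> sum_list ns = length ys \<Longrightarrow>
    (\<Prod>(i, j)\<in>vine_edges ns. sum_list (take j ys) - sum_list (take i ys))
      = prod_list (map (\<lambda>b. \<Prod>i = 1..length b. sum_list (take i b)) (blocks ns ys))"
proof (induction ns arbitrary: ys)
  case Nil then show ?case by (simp add: vine_edges_Nil)
next
  case (Cons n ns)
  let ?r = "drop n ys"
  have n1: "1 \<le> n" and ns1: "\<forall>n\<in>set ns. 1 \<le> n" using Cons.prems by auto
  have lr: "sum_list ns = length ?r" using Cons.prems by simp
  have nle: "n \<le> length ys" using Cons.prems by simp
  let ?sh = "\<lambda>(i::nat, j::nat). (i + n, j + n)"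
  have disj: "{(0::nat, t) | t. 1 \<le> t \<and> t \<le> n} \<inter> ?sh ` vine_edges ns = {}"
    using n1 by auto
  have fin1: "finite {(0::nat, t) | t. 1 \<le> t \<and> t \<le> n}"
  proof -
    have "{(0::nat, t) | t. 1 \<le> t \<and> t \<le> n} = (\<lambda>t. (0, t)) ` {1..n}" by auto
    then show ?thesis by simp
  qed
  have inj: "inj_on ?sh (vine_edges ns)" by (auto simp: inj_on_def)
  let ?f = "\<lambda>(i, j). sum_list (take j ys) - sum_list (take i ys)"
  have p1: "(\<Prod>e\<in>{(0::nat, t) | t. 1 \<le> t \<and> t \<le> n}. ?f e) = (\<Prod>t = 1..n. sum_list (take t (take n ys)))"
  proof -
    have "{(0::nat, t) | t. 1 \<le> t \<and> t \<le> n} = (\<lambda>t. (0, t)) ` {1..n}" by auto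
    moreover have "inj_on (\<lambda>t. (0::nat, t)) {1..n}" by (auto simp: inj_on_def)
    ultimately show ?thesis by (simp add: prod.reindex min_def)
  qed
  have p2: "(\<Prod>e\<in>?sh ` vine_edges ns. ?f e) =
     (\<Prod>(i, j)\<in>vine_edges ns. sum_list (take j ?r) - sum_list (take i ?r))"
    unfolding prod.reindex[OF inj]
  proof (rule prod.cong[OF refl])
    fix e assume "e \<in> vine_edges ns"
    obtain i j where e: "e = (i, j)" by force
    have "take (j + n) ys = take n ys @ take j ?r" "take (i + n) ys = take n ys @ take i ?r"
      by (simp_all add: take_add[of n] add.commute[of _ n])
    then show "(?f \<circ> ?sh) e = (case e of (i, j) \<Rightarrow> sum_list (take j ?r) - sum_list (take i ?r))"
      unfolding e by simp
  qed
  have "length (take n ys) = n" using nle by simp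
  then show ?case
    unfolding vine_edges_Cons prod.union_disjoint[OF fin1 finite_imageI[OF finite_vine_edges] disj]
    using p1 p2 Cons.IH[OF ns1 lr] by simp
qed

lemma inv_prod_list: "inverse (prod_list (map f l)) = prod_list (map (\<lambda>b. inverse (f b :: 'a::field)) l)"
  by (induction l) auto

lemma X_eq:
  fixes x :: "nat \<Rightarrow> 'a::field"
  assumes "i \<le> d"
  shows "(\<Sum>k = 1..i. x k) = sum_list (take i (map x [1..<d+1]))"
proof -
  have "take i (map x [1..<d+1]) = map x [1..<i+1]" using assms by (simp add: take_map take_upt del: upt_Suc)
  moreover have "sum_list (map x [1..<i+1]) = sum x {1..i}"
  proof -
    have "set [1..<i+1] = {1..i}" by auto
    then show ?thesis by (metis sum_set_upt_conv_sum_list_nat)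
  qed
  ultimately show ?thesis by simp
qed

theorem theorem2p8:
  fixes d :: nat and x :: "nat \<Rightarrow> 'a::field_char_0"
  assumes "1 \<le> d"
    and "\<forall>i j. 1 \<le> i \<and> i \<le> j \<and> j \<le> d \<longrightarrow> (\<Sum>k = i..j. x k) \<noteq> 0"
  shows "psi_m1 d (\<lambda>i. \<Sum>k = 1..i. x k)
       = (1 / (\<Sum>k = 1..d. x k)) * log_paj (map x [1..<d+1])"
proof -
  let ?ys = "map x [1..<d+1]"
  let ?X = "\<lambda>i. \<Sum>k = 1..i. x k"
  let ?c = "\<lambda>h. ((-1::'a) ^ (h + 1) / of_nat h)"
  let ?P = "\<lambda>v. prod_list (map paj (blocks v ?ys))"
  have ly: "length ?ys = d" by simp
  have vx: "inverse (vine_x v ?X) = ?P v" if v: "v \<in> vines d" for v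
  proof -
    have v1: "\<forall>n\<in>set v. 1 \<le> n" and vs: "sum_list v = length ?ys" using v by (auto simp: vines_def)
    have "vine_x v ?X = (\<Prod>(i, j)\<in>vine_edges v. sum_list (take j ?ys) - sum_list (take i ?ys))"
      unfolding vine_x_def
    proof (rule prod.cong[OF refl])
      fix e assume e: "e \<in> vine_edges v"
      obtain i j where ij: "e = (i, j)" by force
      have vd: "sum_list v = d" using v by (simp add: vines_def)
      have "i \<le> j \<and> j \<le> sum_list v" by (rule vine_edges_bound) (use e ij in simp)
      then have "i \<le> d" "j \<le> d" using vd by auto
      then show "(case e of (i, j) \<Rightarrow> (if j = 0 then 0 else ?X j) - (if i = 0 then 0 else ?X i)) =
          (case e of (i, j) \<Rightarrow> sum_list (take j ?ys) - sum_list (take i ?ys))"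
        unfolding ij using X_eq[of i d x] X_eq[of j d x] by auto
    qed
    also have "\<dots> = prod_list (map (\<lambda>b. \<Prod>i = 1..length b. sum_list (take i b)) (blocks v ?ys))"
      by (rule vine_prod[OF v1 vs])
    finally have "inverse (vine_x v ?X) = inverse (prod_list (map (\<lambda>b. \<Prod>i = 1..length b. sum_list (take i b)) (blocks v ?ys)))"
      by (simp only:)
    moreover have "paj = (\<lambda>b::'a list. inverse (\<Prod>i = 1..length b. sum_list (take i b)))"
      by (rule ext) (simp add: paj_def divide_inverse)
    ultimately show ?thesis by (simp only: inv_prod_list)
  qed
  have finv: "finite (vines d)"
  proof -
    have "vines d \<subseteq> (\<Union>h\<in>{..d}. comps h d)"
      unfolding vines_def comps_def using len_le_sum by fastforce
    then show ?thesis using finite_comps by (meson finite_UN_I finite_atMost finite_subset)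
  qed
  have img: "length ` vines d \<subseteq> {1..d}"
  proof
    fix h assume "h \<in> length ` vines d"
    then obtain v where v: "v \<in> vines d" "h = length v" by blast
    then have "length v \<le> d" using len_le_sum by (auto simp: vines_def)
    moreover have "v \<noteq> []" using v assms(1) by (auto simp: vines_def)
    ultimately show "h \<in> {1..d}" using v by (cases v) auto
  qed
  have grp: "{v \<in> vines d. length v = h} = comps h d" for h
    unfolding vines_def comps_def by auto
  have "psi_m1 d ?X = (\<Sum>v\<in>vines d. inverse (?X d) * (?c (length v) * ?P v))"
    unfolding psi_m1_def
  proof (rule sum.cong[OF refl])
    fix v assume v: "v \<in> vines d"
    have "?c (length v) * (1 / (vine_x v ?X * ?X d)) = ?c (length v) * (inverse (vine_x v ?X) * inverse (?X d))"
      by (simp only: divide_inverse inverse_mult_distrib mult_1_left)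
    also have "\<dots> = inverse (?X d) * (?c (length v) * ?P v)"
      unfolding vx[OF v] by (simp only: mult_ac)
    finally show "?c (length v) * (1 / (vine_x v ?X * ?X d)) = inverse (?X d) * (?c (length v) * ?P v)" .
  qed
  also have "\<dots> = (\<Sum>h\<in>{1..d}. \<Sum>v\<in>{v \<in> vines d. length v = h}. inverse (?X d) * (?c (length v) * ?P v))"
    by (rule sum.group[OF finv _ img, symmetric]) simp
  also have "\<dots> = (\<Sum>h\<in>{1..d}. inverse (?X d) * (?c h * (\<Sum>v\<in>comps h d. ?P v)))"
    unfolding grp by (rule sum.cong[OF refl]) (simp add: sum_distrib_left comps_def)
  also have "\<dots> = (1 / ?X d) * log_paj ?ys"
    unfolding log_paj_def ly pow_comps by (simp add: sum_distrib_left divide_inverse)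
  finally show ?thesis .
qed

end
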